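(* Consider $\bar{\mathbb R}_+=[0,\infty]$ as a general metric space with distance $(x,y)\mapsto[x,y]$, and for a filter $\mathcal F$ on it put $\liminf(\mathcal F)=\sup_{f\in\mathcal F}\inf f$. Then: (a) a filter $\mathcal F$ on $[0,\infty]$ is weakly flat if and only if either $\liminf(\mathcal F)<\infty$ or $\mathcal F$ is the principal filter $\{f:\infty\in f\}$; (b) every weakly flat filter on $[0,\infty]$ is flat; (c) for weakly flat filters $\mathcal F_1,\mathcal F_2$ on $[0,\infty]$, $\sup_{x}[M^-(\mathcal F_1)(x),M^-(\mathcal F_2)(x)]=[\liminf(\mathcal F_1),\liminf(\mathcal F_2)]$. Consequently the $\mathcal P_1$- and $\mathcal P_2$-completions of $\bar{\mathbb R}_+$ are both isomorphic to $\bar{\mathbb R}_+$.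
   Context: $[x,y]=\max(y-x,0)$ for finite $x,y$, $[x,\infty]=\infty$ for $x<\infty$, $[\infty,y]=0$. A filter on a set is a nonempty set of nonempty subsets closed under finite intersections and supersets. For a general metric space $A$ (here $A(x,y)=[x,y]$), $M^-(\mathcal F)(x)=\sup_{f\in\mathcal F}\inf_{y\in f}A(x,y)$; $\mathcal F$ is weakly flat iff for every $\epsilon>0$ there is $f\in\mathcal F$ such that for all $x\in f$ and $g\in\mathcal F$ there is $y\in g$ with $A(x,y)\le\epsilon$; flat iff the same holds for every finite family $x_1,\dots,x_n\in f$ with a common $y\in g$. The $\mathcal P_1$-completion (resp. $\mathcal P_2$-completion) of $A$ is the general metric space of closed weakly flat (resp. closed flat) filters with distance $\sup_x[M^-(\mathcal F_1)(x),M^-(\mathcal F_2)(x)]$, where a weakly flat $\mathcal F$ is closed iff every $f\in\mathcal F$ contains some $\{x:M^-(\mathcal F)(x)\le\epsilon\}$, $\epsilon>0$. *)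

theory Defs
  imports "HOL-Library.Extended_Nonnegative_Real"
begin

definition rdist :: "ennreal \<Rightarrow> ennreal \<Rightarrow> ennreal" where
  "rdist x y = (if x = \<infinity> then 0 else if y = \<infinity> then \<infinity>
                else ennreal (max (enn2real y - enn2real x) 0))"

definition is_filter :: "'a set set \<Rightarrow> bool" where
  "is_filter F \<longleftrightarrow> F \<noteq> {} \<and> (\<forall>f\<in>F. f \<noteq> {})
     \<and> (\<forall>f\<in>F. \<forall>g\<in>F. f \<inter> g \<in> F)
     \<and> (\<forall>f\<in>F. \<forall>g. f \<subseteq> g \<longrightarrow> g \<in> F)"

definition M_minus :: "('a \<Rightarrow> 'a \<Rightarrow> ennreal) \<Rightarrow> 'a set set \<Rightarrow> 'a \<Rightarrow> ennreal" where
  "M_minus A F x = (SUP f\<in>F. INF y\<in>f. A x y)"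

definition weakly_flat :: "('a \<Rightarrow> 'a \<Rightarrow> ennreal) \<Rightarrow> 'a set set \<Rightarrow> bool" where
  "weakly_flat A F \<longleftrightarrow> is_filter F \<and>
     (\<forall>\<epsilon>::real. \<epsilon> > 0 \<longrightarrow> (\<exists>f\<in>F. \<forall>x\<in>f. \<forall>g\<in>F. \<exists>y\<in>g. A x y \<le> ennreal \<epsilon>))"

definition flat :: "('a \<Rightarrow> 'a \<Rightarrow> ennreal) \<Rightarrow> 'a set set \<Rightarrow> bool" where
  "flat A F \<longleftrightarrow> is_filter F \<and>
     (\<forall>\<epsilon>::real. \<epsilon> > 0 \<longrightarrow> (\<exists>f\<in>F. \<forall>S. finite S \<and> S \<subseteq> f \<longrightarrow>
        (\<forall>g\<in>F. \<exists>y\<in>g. \<forall>x\<in>S. A x y \<le> ennreal \<epsilon>)))"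

definition closed_filter :: "('a \<Rightarrow> 'a \<Rightarrow> ennreal) \<Rightarrow> 'a set set \<Rightarrow> bool" where
  "closed_filter A F \<longleftrightarrow>
     (\<forall>f\<in>F. \<exists>\<epsilon>::real. \<epsilon> > 0 \<and> {x. M_minus A F x \<le> ennreal \<epsilon>} \<subseteq> f)"

definition compl_dist :: "('a \<Rightarrow> 'a \<Rightarrow> ennreal) \<Rightarrow> 'a set set \<Rightarrow> 'a set set \<Rightarrow> ennreal" where
  "compl_dist A F1 F2 = (SUP x. rdist (M_minus A F1 x) (M_minus A F2 x))"

definition P1_completion :: "('a \<Rightarrow> 'a \<Rightarrow> ennreal) \<Rightarrow> 'a set set set" where
  "P1_completion A = {F. weakly_flat A F \<and> closed_filter A F}"

definition P2_completion :: "('a \<Rightarrow> 'a \<Rightarrow> ennreal) \<Rightarrow> 'a set set set" where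
  "P2_completion A = {F. flat A F \<and> closed_filter A F}"

definition gms_iso :: "'a set \<Rightarrow> ('a \<Rightarrow> 'a \<Rightarrow> ennreal) \<Rightarrow> 'b set \<Rightarrow> ('b \<Rightarrow> 'b \<Rightarrow> ennreal) \<Rightarrow> bool" where
  "gms_iso X dX Y dY \<longleftrightarrow> (\<exists>\<phi>. bij_betw \<phi> X Y \<and> (\<forall>a\<in>X. \<forall>b\<in>X. dY (\<phi> a) (\<phi> b) = dX a b))"

definition liminf_filter :: "ennreal set set \<Rightarrow> ennreal" where
  "liminf_filter F = (SUP f\<in>F. Inf f)"

end

theory Submission imports Defs begin

lemma rdist_alt: "rdist x y = (if x = \<infinity> then 0 else y - x)"
  unfolding rdist_def
  by (cases x rule: ennreal_cases; cases y rule: ennreal_cases) (auto simp: ennreal_minus max_def ennreal_neg)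

lemma INF_minus:
  fixes x :: ennreal
  assumes "f \<noteq> {}" "x \<noteq> \<infinity>"
  shows "(INF y\<in>f. y - x) = Inf f - x"
proof (rule antisym)
  show "Inf f - x \<le> (INF y\<in>f. y - x)"
    by (rule INF_greatest) (auto intro: ennreal_minus_mono Inf_lower)
  show "(INF y\<in>f. y - x) \<le> Inf f - x"
  proof (cases "(INF y\<in>f. y - x) = 0")
    case False
    let ?I = "(INF y\<in>f. y - x)"
    have "?I + x \<le> Inf f"
    proof (rule Inf_greatest)
      fix y assume y: "y \<in> f"
      have "?I \<le> y - x" using y by (rule INF_lower)
      then have "y - x > 0" using False by (metis le_zero_eq not_gr_zero)
      then have "x < y" using assms(2) diff_gt_0_iff_gt_ennreal by auto
      then have "?I + x \<le> y - x + x" using \<open>?I \<le> y - x\<close> by (simp add: add_right_mono)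
      also have "\<dots> = y" using \<open>x < y\<close> diff_add_cancel_ennreal by auto
      finally show "?I + x \<le> y" .
    qed
    then show ?thesis using ennreal_le_minus_iff by auto
  qed simp
qed

lemma SUP_minus:
  fixes x :: ennreal
  assumes "F \<noteq> {}" "x \<noteq> \<infinity>"
  shows "(SUP f\<in>F. g f - x) = (SUP f\<in>F. g f) - x"
proof (rule antisym)
  show "(SUP f\<in>F. g f - x) \<le> (SUP f\<in>F. g f) - x"
    by (rule SUP_least) (auto intro: ennreal_minus_mono SUP_upper)
  have "(SUP f\<in>F. g f) \<le> (SUP f\<in>F. g f - x + x)"
    by (rule SUP_mono) (auto simp: diff_add_self_ennreal)
  also have "\<dots> = (SUP f\<in>F. g f - x) + x" using ennreal_SUP_add_left[OF assms(1)] by simp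
  finally show "(SUP f\<in>F. g f) - x \<le> (SUP f\<in>F. g f - x)"
    using assms(2) by (simp add: ennreal_minus_le_iff add.commute)
qed

lemma M_minus_eq:
  assumes "is_filter F"
  shows "M_minus rdist F x = rdist x (liminf_filter F)"
proof (cases "x = \<infinity>")
  case True
  then show ?thesis using assms by (simp add: M_minus_def rdist_alt is_filter_def)
next
  case False
  have ne: "F \<noteq> {}" "\<And>f. f \<in> F \<Longrightarrow> f \<noteq> {}" using assms by (auto simp: is_filter_def)
  have "M_minus rdist F x = (SUP f\<in>F. Inf f - x)"
    unfolding M_minus_def rdist_alt using False ne by (simp add: INF_minus)
  also have "\<dots> = liminf_filter F - x" unfolding liminf_filter_def using SUP_minus[OF ne(1) False] by simp
  finally show ?thesis using False by (simp add: rdist_alt)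
qed

lemma aux: "(a::real) \<ge> 0 \<Longrightarrow> b \<ge> 0 \<Longrightarrow> x \<ge> 0 \<Longrightarrow> (ennreal b - ennreal x) - (ennreal a - ennreal x) \<le> ennreal b - ennreal a"
  by (cases "a \<le> x"; cases "b \<le> x") (auto simp: ennreal_neg ennreal_minus intro!: ennreal_leI)

lemma rdist_pointwise: "rdist (rdist x a) (rdist x b) \<le> rdist a b"
proof (cases "x = \<infinity> \<or> a = \<infinity> \<or> b = \<infinity>")
  case True
  then show ?thesis by (auto simp: rdist_alt)
next
  case False
  then obtain x' a' b' where "x = ennreal x'" "a = ennreal a'" "b = ennreal b'" "x' \<ge> 0" "a' \<ge> 0" "b' \<ge> 0"
    by (metis ennreal_cases infinity_ennreal_def)
  then show ?thesis using False aux[of a' b' x'] by (simp add: rdist_alt ennreal_minus)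
qed

lemma compl_eq:
  assumes "is_filter F1" "is_filter F2"
  shows "compl_dist rdist F1 F2 = rdist (liminf_filter F1) (liminf_filter F2)"
proof -
  have "compl_dist rdist F1 F2 = (SUP x. rdist (rdist x (liminf_filter F1)) (rdist x (liminf_filter F2)))"
    unfolding compl_dist_def using M_minus_eq[OF assms(1)] M_minus_eq[OF assms(2)] by simp
  also have "\<dots> = rdist (liminf_filter F1) (liminf_filter F2)"
  proof (rule antisym)
    show "(SUP x. rdist (rdist x (liminf_filter F1)) (rdist x (liminf_filter F2))) \<le> rdist (liminf_filter F1) (liminf_filter F2)"
      by (rule SUP_least) (rule rdist_pointwise)
    have "rdist (liminf_filter F1) (liminf_filter F2) = rdist (rdist 0 (liminf_filter F1)) (rdist 0 (liminf_filter F2))"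
      by (simp add: rdist_alt)
    also have "\<dots> \<le> (SUP x. rdist (rdist x (liminf_filter F1)) (rdist x (liminf_filter F2)))"
      by (rule SUP_upper) simp
    finally show "rdist (liminf_filter F1) (liminf_filter F2) \<le> (SUP x. rdist (rdist x (liminf_filter F1)) (rdist x (liminf_filter F2)))" .
  qed
  finally show ?thesis .
qed

lemma approx:
  assumes "is_filter F" "liminf_filter F < \<infinity>" "(e::real) > 0"
  shows "\<exists>f0\<in>F. liminf_filter F < Inf f0 + ennreal e"
proof (cases "liminf_filter F = 0")
  case True
  obtain f0 where "f0 \<in> F" using assms(1) by (auto simp: is_filter_def)
  moreover have "liminf_filter F < Inf f0 + ennreal e" using True assms(3) by (simp add: add_nonneg_pos)
  ultimately show ?thesis by blast
next
  case False
  have "liminf_filter F - ennreal e < liminf_filter F" using False assms by (metis ennreal_between ennreal_less_zero_iff infinity_ennreal_def not_gr_zero)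
  then obtain f0 where f0: "f0 \<in> F" "liminf_filter F - ennreal e < Inf f0"
    unfolding liminf_filter_def by (auto simp: less_SUP_iff)
  then have "liminf_filter F < Inf f0 + ennreal e" using assms by (metis linorder_not_le ennreal_le_minus_iff)
  then show ?thesis using f0 by blast
qed



lemma Inf_le_liminf: "g \<in> F \<Longrightarrow> Inf g \<le> liminf_filter F"
  unfolding liminf_filter_def by (rule SUP_upper)

lemma flat_if:
  assumes F: "is_filter F" and h: "liminf_filter F < \<infinity> \<or> F = {f. \<infinity> \<in> f}"
  shows "flat rdist F"
  unfolding flat_def
proof (intro conjI allI impI F)
  fix \<epsilon> :: real assume e: "\<epsilon> > 0"
  have gne: "\<And>g. g \<in> F \<Longrightarrow> g \<noteq> {}" using F by (auto simp: is_filter_def)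
  show "\<exists>f\<in>F. \<forall>S. finite S \<and> S \<subseteq> f \<longrightarrow> (\<forall>g\<in>F. \<exists>y\<in>g. \<forall>x\<in>S. rdist x y \<le> ennreal \<epsilon>)"
  proof (cases "liminf_filter F < \<infinity>")
    case True
    obtain f0 where f0: "f0 \<in> F" "liminf_filter F < Inf f0 + ennreal (\<epsilon>/2)"
      using approx[OF F True, of "\<epsilon>/2"] e by auto
    show ?thesis
    proof (rule bexI[OF _ f0(1)], intro allI impI ballI)
      fix S g assume S: "finite S \<and> S \<subseteq> f0" and g: "g \<in> F"
      show "\<exists>y\<in>g. \<forall>x\<in>S. rdist x y \<le> ennreal \<epsilon>"
      proof (cases "S - {\<infinity>} = {}")
        case True
        obtain y where "y \<in> g" using gne[OF g] by auto
        moreover have "\<forall>x\<in>S. rdist x y \<le> ennreal \<epsilon>" using True by (auto simp: rdist_alt)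
        ultimately show ?thesis by blast
      next
        case False
        define m where "m = Min (S - {\<infinity>})"
        have fin: "finite (S - {\<infinity>})" using S by auto
        have m: "m \<in> S - {\<infinity>}" unfolding m_def using Min_in[OF fin False] .
        have mle: "\<And>x. x \<in> S - {\<infinity>} \<Longrightarrow> m \<le> x" unfolding m_def using fin by auto
        have "Inf f0 \<le> m" using m S by (auto intro: Inf_lower)
        have "Inf g < m + ennreal (\<epsilon>/2)"
          using Inf_le_liminf[OF g] f0(2) \<open>Inf f0 \<le> m\<close>
          by (meson add_right_mono order_le_less_trans order_less_le_trans)
        then obtain y where y: "y \<in> g" "y < m + ennreal (\<epsilon>/2)" by (auto simp: Inf_less_iff)
        have "\<forall>x\<in>S. rdist x y \<le> ennreal \<epsilon>"
        proof
          fix x assume x: "x \<in> S"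
          show "rdist x y \<le> ennreal \<epsilon>"
          proof (cases "x = \<infinity>")
            case False
            then have "m \<le> x" using mle x by auto
            moreover have "ennreal (\<epsilon>/2) \<le> ennreal \<epsilon>" using e by (intro ennreal_leI) simp
            ultimately have "m + ennreal (\<epsilon>/2) \<le> x + ennreal \<epsilon>" by (rule add_mono)
            then have "y \<le> x + ennreal \<epsilon>" using y(2) by simp
            then show ?thesis using False by (simp add: rdist_alt ennreal_minus_le_iff add.commute)
          qed (simp add: rdist_alt)
        qed
        then show ?thesis using y(1) by blast
      qed
    qed
  next
    case False
    then have P: "F = {f. \<infinity> \<in> f}" using h by auto
    show ?thesis
    proof (rule bexI[of _ "{\<infinity>}"], intro allI impI ballI)
      fix S :: "ennreal set" and g assume S: "finite S \<and> S \<subseteq> {\<infinity>}" and g: "g \<in> F"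
      obtain y where "y \<in> g" using gne[OF g] by auto
      moreover have "\<forall>x\<in>S. rdist x y \<le> ennreal \<epsilon>" using S by (auto simp: rdist_alt)
      ultimately show "\<exists>y\<in>g. \<forall>x\<in>S. rdist x y \<le> ennreal \<epsilon>" by blast
    qed (simp add: P)
  qed
qed

lemma flat_wf: "flat A F \<Longrightarrow> weakly_flat A F"
  unfolding flat_def weakly_flat_def
proof (intro conjI allI impI; elim conjE)
  fix \<epsilon> :: real
  assume H: "\<forall>\<epsilon>>0. \<exists>f\<in>F. \<forall>S. finite S \<and> S \<subseteq> f \<longrightarrow> (\<forall>g\<in>F. \<exists>y\<in>g. \<forall>x\<in>S. A x y \<le> ennreal \<epsilon>)" and e: "\<epsilon> > 0"
  then obtain f where f: "f \<in> F" "\<forall>S. finite S \<and> S \<subseteq> f \<longrightarrow> (\<forall>g\<in>F. \<exists>y\<in>g. \<forall>x\<in>S. A x y \<le> ennreal \<epsilon>)" by blast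
  show "\<exists>f\<in>F. \<forall>x\<in>f. \<forall>g\<in>F. \<exists>y\<in>g. A x y \<le> ennreal \<epsilon>"
  proof (rule bexI[OF _ f(1)], intro ballI)
    fix x g assume "x \<in> f" "g \<in> F"
    then show "\<exists>y\<in>g. A x y \<le> ennreal \<epsilon>" using f(2)[rule_format, of "{x}" g] by auto
  qed
qed auto

lemma wf_inf:
  assumes W: "weakly_flat rdist F" and L: "\<not> liminf_filter F < \<infinity>"
  shows "F = {f. \<infinity> \<in> f}"
proof -
  have F: "is_filter F" using W by (simp add: weakly_flat_def)
  have up: "\<And>a b. a \<in> F \<Longrightarrow> a \<subseteq> b \<Longrightarrow> b \<in> F" using F unfolding is_filter_def by blast
  have cap: "\<And>a b. a \<in> F \<Longrightarrow> b \<in> F \<Longrightarrow> a \<inter> b \<noteq> {}" using F unfolding is_filter_def by metis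
  obtain f0 where f0: "f0 \<in> F" "\<forall>x\<in>f0. \<forall>g\<in>F. \<exists>y\<in>g. rdist x y \<le> ennreal 1"
    using W unfolding weakly_flat_def by (meson zero_less_one)
  have "f0 \<subseteq> {\<infinity>}"
  proof
    fix x assume x: "x \<in> f0"
    show "x \<in> {\<infinity>}"
    proof (rule ccontr)
      assume "x \<notin> {\<infinity>}"
      then have xf: "x \<noteq> \<infinity>" by auto
      have "\<forall>g\<in>F. Inf g \<le> x + 1"
      proof
        fix g assume "g \<in> F"
        then obtain y where y: "y \<in> g" "rdist x y \<le> ennreal 1" using f0 x by blast
        then have "y \<le> x + 1" using xf by (simp add: rdist_alt ennreal_minus_le_iff add.commute)
        then show "Inf g \<le> x + 1" using y(1) by (meson Inf_lower order_trans)
      qed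
      then have "liminf_filter F \<le> x + 1" unfolding liminf_filter_def by (simp add: SUP_least)
      moreover have "x + 1 < \<infinity>" using xf by (simp add: less_top[symmetric])
      ultimately show False using L by (meson order_le_less_trans)
    qed
  qed
  moreover have "f0 \<noteq> {}" using F f0(1) by (auto simp: is_filter_def)
  ultimately have fi: "f0 = {\<infinity>}" by auto
  show ?thesis
  proof (intro set_eqI iffI)
    fix g :: "ennreal set" assume g: "g \<in> F"
    then have "f0 \<inter> g \<noteq> {}" using f0(1) cap by blast
    then show "g \<in> {f. \<infinity> \<in> f}" using fi by blast
  next
    fix g :: "ennreal set" assume "g \<in> {f. \<infinity> \<in> f}"
    then have "f0 \<subseteq> g" using fi by auto
    then show "g \<in> F" using f0(1) up by blast
  qed
qed

lemma partA:
  assumes "is_filter F"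
  shows "weakly_flat rdist F \<longleftrightarrow> liminf_filter F < \<infinity> \<or> F = {f. \<infinity> \<in> f}"
proof
  assume "weakly_flat rdist F"
  then show "liminf_filter F < \<infinity> \<or> F = {f. \<infinity> \<in> f}" using wf_inf by blast
next
  assume "liminf_filter F < \<infinity> \<or> F = {f. \<infinity> \<in> f}"
  then show "weakly_flat rdist F" by (rule flat_wf[OF flat_if[OF assms]])
qed

lemma wf_flat: "weakly_flat rdist F \<Longrightarrow> flat rdist F"
proof -
  assume w: "weakly_flat rdist F"
  then have F: "is_filter F" by (simp add: weakly_flat_def)
  have "liminf_filter F < \<infinity> \<or> F = {f. \<infinity> \<in> f}" using partA[OF F] w by simp
  then show ?thesis by (rule flat_if[OF F])
qed


definition canon :: "ennreal \<Rightarrow> ennreal set set" where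
  "canon L = {f. \<exists>e::real. e > 0 \<and> {x. rdist x L \<le> ennreal e} \<subseteq> f}"

lemma rdist_self: "rdist L L = 0"
  by (cases "L = \<infinity>") (auto simp: rdist_alt)

lemma rdist_top: "x \<noteq> \<infinity> \<Longrightarrow> rdist x \<infinity> = \<infinity>"
  unfolding rdist_def by simp

lemma D_top: "e > 0 \<Longrightarrow> {x. rdist x \<infinity> \<le> ennreal e} = {\<infinity>}"
  using rdist_top by (auto simp: rdist_alt top_unique)

lemma canon_top:
  assumes "f \<in> canon L" shows "\<infinity> \<in> f"
proof -
  obtain e where "e > 0" "{x. rdist x L \<le> ennreal e} \<subseteq> f" using assms unfolding canon_def by blast
  moreover have "rdist \<infinity> L \<le> ennreal e" by (simp add: rdist_alt)
  ultimately show ?thesis by blast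
qed

lemma canon_filter: "is_filter (canon L)"
  unfolding is_filter_def
proof (intro conjI ballI allI impI)
  have "UNIV \<in> canon L" unfolding canon_def by (intro CollectI exI[of _ "1::real"] conjI) simp_all
  then show "canon L \<noteq> {}" by blast
next
  fix f assume "f \<in> canon L" then show "f \<noteq> {}" using canon_top by blast
next
  fix f g assume f: "f \<in> canon L" and g: "g \<in> canon L"
  obtain e1 where e1: "e1 > 0" "{x. rdist x L \<le> ennreal e1} \<subseteq> f" using f unfolding canon_def by blast
  obtain e2 where e2: "e2 > 0" "{x. rdist x L \<le> ennreal e2} \<subseteq> g" using g unfolding canon_def by blast
  have "{x. rdist x L \<le> ennreal (min e1 e2)} \<subseteq> f \<inter> g"
  proof
    fix x assume "x \<in> {x. rdist x L \<le> ennreal (min e1 e2)}"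
    then have x: "rdist x L \<le> ennreal (min e1 e2)" by simp
    have "ennreal (min e1 e2) \<le> ennreal e1" by (intro ennreal_leI) simp
    then have "rdist x L \<le> ennreal e1" using x by (rule order_trans[rotated])
    then have 1: "x \<in> f" using e1(2) by blast
    have "ennreal (min e1 e2) \<le> ennreal e2" by (intro ennreal_leI) simp
    then have "rdist x L \<le> ennreal e2" using x by (rule order_trans[rotated])
    then have 2: "x \<in> g" using e2(2) by blast
    show "x \<in> f \<inter> g" using 1 2 by blast
  qed
  moreover have "min e1 e2 > 0" using e1(1) e2(1) by simp
  ultimately show "f \<inter> g \<in> canon L" unfolding canon_def by blast
next
  fix f g assume f: "f \<in> canon L" and fg: "f \<subseteq> g"
  obtain e where e: "e > 0" "{x. rdist x L \<le> ennreal e} \<subseteq> f" using f unfolding canon_def by blast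
  then have "{x. rdist x L \<le> ennreal e} \<subseteq> g" using fg by blast
  then show "g \<in> canon L" unfolding canon_def using e(1) by blast
qed

lemma canon_liminf: "liminf_filter (canon L) = L"
proof (rule antisym)
  show "liminf_filter (canon L) \<le> L"
    unfolding liminf_filter_def
  proof (rule SUP_least)
    fix f assume "f \<in> canon L"
    then obtain e where "e > 0" "{x. rdist x L \<le> ennreal e} \<subseteq> f" by (auto simp: canon_def)
    then have "L \<in> f" using rdist_self by auto
    then show "Inf f \<le> L" by (rule Inf_lower)
  qed
  show "L \<le> liminf_filter (canon L)"
  proof (cases "L = \<infinity>")
    case True
    have "{x. rdist x L \<le> ennreal 1} = {\<infinity>}" using True D_top[of 1] by simp
    then have "{x. rdist x L \<le> ennreal 1} \<subseteq> {\<infinity>}" by simp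
    then have "{\<infinity>} \<in> canon L" unfolding canon_def by (intro CollectI exI[of _ "1::real"]) simp
    then have "Inf {\<infinity>} \<le> liminf_filter (canon L)" by (rule Inf_le_liminf)
    then show ?thesis using True by simp
  next
    case False
    show ?thesis
    proof (rule ennreal_le_epsilon)
      fix e :: real assume e: "0 < e"
      define D where "D = {x. rdist x L \<le> ennreal e}"
      have D: "D \<in> canon L" unfolding canon_def D_def using e by (intro CollectI exI[of _ e] conjI subset_refl)
      have "L - ennreal e \<le> Inf D"
      proof (rule Inf_greatest)
        fix x assume "x \<in> D"
        then have x: "rdist x L \<le> ennreal e" by (simp add: D_def)
        show "L - ennreal e \<le> x"
        proof (cases "x = \<infinity>")
          case False
          then have "L - x \<le> ennreal e" using x by (simp add: rdist_alt)
          then have "L \<le> x + ennreal e" unfolding ennreal_minus_le_iff by (simp add: add.commute)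
          then show ?thesis unfolding ennreal_minus_le_iff by (simp add: add.commute)
        qed simp
      qed
      then have "L - ennreal e + ennreal e \<le> Inf D + ennreal e" by (rule add_right_mono)
      moreover have "L \<le> L - ennreal e + ennreal e" by (simp add: diff_add_self_ennreal linorder_not_le less_imp_le)
      moreover have "Inf D \<le> liminf_filter (canon L)" using D by (rule Inf_le_liminf)
      moreover have "Inf D + ennreal e \<le> liminf_filter (canon L) + ennreal e"
        using \<open>Inf D \<le> liminf_filter (canon L)\<close> by (rule add_right_mono)
      ultimately show "L \<le> liminf_filter (canon L) + ennreal e"
        by (meson order_trans)
    qed
  qed
qed

lemma canon_wf: "weakly_flat rdist (canon L)"
proof (cases "L = \<infinity>")
  case True
  have "canon L = {f. \<infinity> \<in> f}"
  proof (intro set_eqI iffI)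
    fix f assume "f \<in> canon L" then show "f \<in> {f. \<infinity> \<in> f}" using canon_top by blast
  next
    fix f :: "ennreal set" assume "f \<in> {f. \<infinity> \<in> f}"
    moreover have "{x. rdist x L \<le> ennreal 1} = {\<infinity>}" using True D_top[of 1] by simp
    ultimately have "{x. rdist x L \<le> ennreal 1} \<subseteq> f" by simp
    then show "f \<in> canon L" unfolding canon_def by (intro CollectI exI[of _ "1::real"]) simp
  qed
  then have "liminf_filter (canon L) < \<infinity> \<or> canon L = {f. \<infinity> \<in> f}" by simp
  then show ?thesis by (rule iffD2[OF partA[OF canon_filter]])
next
  case False
  then have "liminf_filter (canon L) < \<infinity> \<or> canon L = {f. \<infinity> \<in> f}" by (simp add: canon_liminf less_top)
  then show ?thesis by (rule iffD2[OF partA[OF canon_filter]])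
qed

lemma canon_closed: "closed_filter rdist (canon L)"
  unfolding closed_filter_def M_minus_eq[OF canon_filter] canon_liminf
  by (auto simp: canon_def)

lemma closed_eq:
  assumes W: "weakly_flat rdist F" and C: "closed_filter rdist F"
  shows "F = canon (liminf_filter F)"
proof -
  have F: "is_filter F" using W by (simp add: weakly_flat_def)
  have up: "\<And>a b. a \<in> F \<Longrightarrow> a \<subseteq> b \<Longrightarrow> b \<in> F" using F unfolding is_filter_def by blast
  let ?L = "liminf_filter F"
  show ?thesis
  proof (intro set_eqI iffI)
    fix f assume "f \<in> F"
    then obtain e where "e > 0" "{x. M_minus rdist F x \<le> ennreal e} \<subseteq> f"
      using C unfolding closed_filter_def by blast
    then show "f \<in> canon ?L" unfolding canon_def M_minus_eq[OF F] by blast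
  next
    fix f assume "f \<in> canon ?L"
    then obtain e where e: "e > 0" "{x. rdist x ?L \<le> ennreal e} \<subseteq> f" by (auto simp: canon_def)
    have "{x. rdist x ?L \<le> ennreal e} \<in> F"
    proof (cases "?L < \<infinity>")
      case False
      then have "F = {f. \<infinity> \<in> f}" by (rule wf_inf[OF W])
      then show ?thesis by (simp add: rdist_alt)
    next
      case True
      obtain f0 where f0: "f0 \<in> F" "?L < Inf f0 + ennreal e" using approx[OF F True e(1)] by blast
      have "f0 \<subseteq> {x. rdist x ?L \<le> ennreal e}"
      proof
        fix x assume x: "x \<in> f0"
        show "x \<in> {x. rdist x ?L \<le> ennreal e}"
        proof (cases "x = \<infinity>")
          case False
          have "Inf f0 \<le> x" using x by (rule Inf_lower)
          then have "?L \<le> x + ennreal e" using f0(2) by (meson add_right_mono order_less_imp_le order_trans)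
          then have "?L - x \<le> ennreal e" using False by (simp add: ennreal_minus_le_iff)
          then show ?thesis using False by (simp add: rdist_alt)
        qed (simp add: rdist_alt)
      qed
      then show ?thesis using f0(1) up by blast
    qed
    then show "f \<in> F" using e(2) up by blast
  qed
qed

lemma P1_iso: "gms_iso (P1_completion rdist) (compl_dist rdist) UNIV rdist"
  unfolding gms_iso_def
proof (intro exI conjI ballI)
  show "bij_betw liminf_filter (P1_completion rdist) UNIV"
    unfolding bij_betw_def
  proof
    show "inj_on liminf_filter (P1_completion rdist)"
    proof (rule inj_onI)
      fix F1 F2 assume "F1 \<in> P1_completion rdist" "F2 \<in> P1_completion rdist" "liminf_filter F1 = liminf_filter F2"
      then have h: "weakly_flat rdist F1" "closed_filter rdist F1" "weakly_flat rdist F2" "closed_filter rdist F2"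
        unfolding P1_completion_def by auto
      have "F1 = canon (liminf_filter F1)" by (rule closed_eq[OF h(1,2)])
      also have "\<dots> = canon (liminf_filter F2)" using \<open>liminf_filter F1 = liminf_filter F2\<close> by (rule arg_cong)
      also have "\<dots> = F2" by (rule closed_eq[OF h(3,4), symmetric])
      finally show "F1 = F2" .
    qed
    show "liminf_filter ` P1_completion rdist = UNIV"
    proof (intro set_eqI iffI)
      fix L :: ennreal
      have "canon L \<in> P1_completion rdist" unfolding P1_completion_def using canon_wf canon_closed by blast
      then show "L \<in> liminf_filter ` P1_completion rdist" by (rule image_eqI[where x="canon L" and f=liminf_filter and b=L, OF canon_liminf[of L, symmetric]])
    qed simp
  qed
next
  fix a b assume ab: "a \<in> P1_completion rdist" "b \<in> P1_completion rdist"
  show "rdist (liminf_filter a) (liminf_filter b) = compl_dist rdist a b"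
  proof -
    have "is_filter a" "is_filter b" using ab unfolding P1_completion_def weakly_flat_def by auto
    then show ?thesis by (simp add: compl_eq)
  qed
qed

lemma P2_eq: "P2_completion rdist = P1_completion rdist"
  unfolding P1_completion_def P2_completion_def by (auto intro: wf_flat flat_wf)

theorem mainTheorem19:
  shows "(\<forall>F. is_filter F \<longrightarrow>
            (weakly_flat rdist F \<longleftrightarrow> liminf_filter F < \<infinity> \<or> F = {f. \<infinity> \<in> f}))
       \<and> (\<forall>F. weakly_flat rdist F \<longrightarrow> flat rdist F)
       \<and> (\<forall>F1 F2. weakly_flat rdist F1 \<and> weakly_flat rdist F2 \<longrightarrow>
            compl_dist rdist F1 F2 = rdist (liminf_filter F1) (liminf_filter F2))
       \<and> gms_iso (P1_completion rdist) (compl_dist rdist) UNIV rdist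
       \<and> gms_iso (P2_completion rdist) (compl_dist rdist) UNIV rdist"
proof (intro conjI allI impI)
  show "gms_iso (P1_completion rdist) (compl_dist rdist) UNIV rdist" by (rule P1_iso)
  show "gms_iso (P2_completion rdist) (compl_dist rdist) UNIV rdist" unfolding P2_eq by (rule P1_iso)
next
  fix F :: "ennreal set set" assume "is_filter F"
  then show "weakly_flat rdist F \<longleftrightarrow> liminf_filter F < \<infinity> \<or> F = {f. \<infinity> \<in> f}" by (rule partA)
next
  fix F :: "ennreal set set" assume "weakly_flat rdist F"
  then show "flat rdist F" by (rule wf_flat)
next
  fix F1 F2 :: "ennreal set set" assume "weakly_flat rdist F1 \<and> weakly_flat rdist F2"
  then show "compl_dist rdist F1 F2 = rdist (liminf_filter F1) (liminf_filter F2)"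
    unfolding weakly_flat_def by (auto intro: compl_eq)
qed

end
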